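(* Let $\mathbf{t}$ be the Tribonacci sequence, fixed point of $0\mapsto01$, $1\mapsto02$, $2\mapsto0$. For each $k\ge1$, the sequence $\mathbf{t}$ is totally $(k,1)$-unbalanced.
   Context: For positive integers $k,C$, a sequence $\mathbf{x}$ is totally $(k,C)$-unbalanced if for every length-$k$ factor $w$ of $\mathbf{x}$ there exist two factors $u,v$ of $\mathbf{x}$ with $|u|=|v|$ and $||u|_w-|v|_w|>C$, where $|u|_w$ is the number of (possibly overlapping) occurrences of $w$ in $u$. *)

theory Defs
  imports Main
begin

text \<open>Tribonacci morphism on the alphabet {0,1,2}: 0 -> 01, 1 -> 02, 2 -> 0.
  (Letters outside {0,1,2} never occur; they are mapped to [0] only for totality.)\<close>
fun trib_morph :: "nat \<Rightarrow> nat list" where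
  "trib_morph 0 = [0, 1]"
| "trib_morph (Suc 0) = [0, 2]"
| "trib_morph _ = [0]"

definition trib_apply :: "nat list \<Rightarrow> nat list" where
  "trib_apply xs = concat (map trib_morph xs)"

text \<open>The n-th iterate of the morphism applied to the letter 0; each is a prefix of the next
  and has length at least n+1.\<close>
definition trib_iter :: "nat \<Rightarrow> nat list" where
  "trib_iter n = (trib_apply ^^ n) [0]"

text \<open>The Tribonacci word t = lim trib_iter n, the fixed point of the morphism starting with 0.\<close>
definition tribonacci :: "nat \<Rightarrow> nat" where
  "tribonacci i = trib_iter (Suc i) ! i"

definition factors :: "(nat \<Rightarrow> 'a) \<Rightarrow> 'a list set" where
  "factors x = {u. \<exists>i. u = map x [i..<i + length u]}"

definition occ :: "'a list \<Rightarrow> 'a list \<Rightarrow> nat" where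
  "occ u w = card {j. j + length w \<le> length u \<and> take (length w) (drop j u) = w}"

definition totally_unbalanced :: "nat \<Rightarrow> nat \<Rightarrow> (nat \<Rightarrow> 'a) \<Rightarrow> bool" where
  "totally_unbalanced k C x \<longleftrightarrow>
     (\<forall>w \<in> factors x. length w = k \<longrightarrow>
        (\<exists>u \<in> factors x. \<exists>v \<in> factors x. length u = length v \<and>
            \<bar>int (occ u w) - int (occ v w)\<bar> > int C))"

end

theory Submission
  imports Defs
begin


abbreviation t :: "nat \<Rightarrow> nat" where "t \<equiv> tribonacci"
abbreviation sg :: "nat list \<Rightarrow> nat list" where "sg \<equiv> trib_apply"

definition pre :: "nat \<Rightarrow> nat list" where "pre j = map tribonacci [0..<j]"
definition occ_at :: "nat list \<Rightarrow> nat \<Rightarrow> bool" where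
  "occ_at w p \<longleftrightarrow> map tribonacci [p..<p+length w] = w"
definition sq :: "nat \<Rightarrow> nat \<Rightarrow> nat" where
  "sq n j = length ((trib_apply ^^ n) (pre j))"

lemma sg_append[simp]: "sg (xs @ ys) = sg xs @ sg ys"
  by (simp add: trib_apply_def)
lemma sg_Nil[simp]: "sg [] = []" by (simp add: trib_apply_def)
lemma sg_Cons[simp]: "sg (a # xs) = trib_morph a @ sg xs" by (simp add: trib_apply_def)

lemma sgn_append: "(sg ^^ n) (xs @ ys) = (sg ^^ n) xs @ (sg ^^ n) ys"
  by (induction n) auto
lemma sgn_Nil[simp]: "(sg ^^ n) [] = []"
  by (induction n) auto

lemma morph_len: "1 \<le> length (trib_morph a)" "length (trib_morph a) \<le> 2"
  by (cases a rule: trib_morph.cases; simp)+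

lemma morph_hd: "\<exists>z. trib_morph a = 0 # z"
  by (cases a rule: trib_morph.cases; simp)

lemma morph_set: "set (trib_morph a) \<subseteq> {0,1,2}"
  by (cases a rule: trib_morph.cases; simp)

lemma sg_len: "length xs \<le> length (sg xs)"
proof (induction xs)
  case (Cons a xs) then show ?case using morph_len[of a] by simp
qed simp

lemma sgn_len: "length xs \<le> length ((sg ^^ n) xs)"
  by (induction n) (auto intro: le_trans sg_len)

lemma sg_set: "set (sg xs) \<subseteq> {0,1,2}"
  by (induction xs) (use morph_set in auto)

lemma T_Suc: "trib_iter (Suc m) = sg (trib_iter m)"
  by (simp add: trib_iter_def)

lemma T_Cons: "\<exists>z. trib_iter m = 0 # z"
proof (induction m)
  case 0 then show ?case by (simp add: trib_iter_def)
next
  case (Suc m) then show ?case by (auto simp: T_Suc)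
qed

lemma T_prefix1: "\<exists>zs. trib_iter (Suc m) = trib_iter m @ zs"
proof (induction m)
  case 0 then show ?case by (simp add: trib_iter_def trib_apply_def)
next
  case (Suc m)
  then obtain zs where "trib_iter (Suc m) = trib_iter m @ zs" by blast
  then show ?case by (simp add: T_Suc[of "Suc m"] T_Suc[of m])
qed

lemma T_mono: "m \<le> m' \<Longrightarrow> \<exists>zs. trib_iter m' = trib_iter m @ zs"
proof (induction m' rule: dec_induct)
  case base then show ?case by simp
next
  case (step n)
  then obtain zs where "trib_iter n = trib_iter m @ zs" by blast
  moreover obtain zs' where "trib_iter (Suc n) = trib_iter n @ zs'" using T_prefix1 by blast
  ultimately show ?case by auto
qed

lemma T_len: "m < length (trib_iter m)"
proof (induction m)
  case 0 then show ?case by (simp add: trib_iter_def)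
next
  case (Suc m)
  obtain z where z: "trib_iter m = 0 # z" using T_Cons by blast
  have "length (trib_iter (Suc m)) = 2 + length (sg z)" by (simp add: T_Suc z)
  moreover have "length z \<le> length (sg z)" by (rule sg_len)
  ultimately show ?case using Suc z by simp
qed

lemma t_T: "i < length (trib_iter m) \<Longrightarrow> t i = trib_iter m ! i"
proof -
  assume a: "i < length (trib_iter m)"
  define M where "M = max m (Suc i)"
  obtain zs where z1: "trib_iter M = trib_iter m @ zs" using T_mono[of m M] M_def by auto
  obtain zs' where z2: "trib_iter M = trib_iter (Suc i) @ zs'" using T_mono[of "Suc i" M] M_def by auto
  have b: "i < length (trib_iter (Suc i))" using T_len[of "Suc i"] by simp
  have "t i = trib_iter (Suc i) ! i" by (simp add: tribonacci_def)
  also have "\<dots> = trib_iter M ! i" using z2 b by (simp add: nth_append)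
  also have "\<dots> = trib_iter m ! i" using z1 a by (simp add: nth_append)
  finally show ?thesis .
qed

lemma t_lt3: "t i < 3"
proof -
  have "i < length (trib_iter (Suc i))" using T_len[of "Suc i"] by simp
  then have "t i \<in> set (trib_iter (Suc i))" by (simp add: tribonacci_def)
  then have "t i \<in> {0,1,2}" using sg_set[of "trib_iter i"] by (auto simp: T_Suc)
  then show ?thesis by auto
qed

lemma pre_T: "j \<le> length (trib_iter m) \<Longrightarrow> pre j = take j (trib_iter m)"
proof (rule nth_equalityI)
  assume "j \<le> length (trib_iter m)"
  then show "length (pre j) = length (take j (trib_iter m))" by (simp add: pre_def)
  fix i assume "j \<le> length (trib_iter m)" "i < length (pre j)"
  then show "pre j ! i = take j (trib_iter m) ! i" using t_T[of i m] by (simp add: pre_def)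
qed

lemma pre_add: "pre (j + m) = pre j @ map t [j..<j+m]"
  unfolding pre_def by (subst upt_add_eq_append) auto

lemma pre_len[simp]: "length (pre j) = j" by (simp add: pre_def)

lemma T_funpow: "(sg ^^ n) (trib_iter m) = trib_iter (m + n)"
  by (induction n) (auto simp: T_Suc)

lemma pre_sigma: "(sg ^^ n) (pre j) = pre (sq n j)"
proof -
  have "pre j = take j (trib_iter j)" using T_len[of j] by (intro pre_T) simp
  then obtain zs where z: "trib_iter j = pre j @ zs"
    by (metis append_take_drop_id)
  have "trib_iter (j + n) = (sg ^^ n) (pre j) @ (sg ^^ n) zs"
    by (simp add: T_funpow[symmetric] z sgn_append)
  then have "(sg ^^ n) (pre j) = take (sq n j) (trib_iter (j + n))"
    by (simp add: sq_def)
  also have "\<dots> = pre (sq n j)"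
    by (rule pre_T[symmetric]) (simp add: sq_def \<open>trib_iter (j + n) = _\<close>)
  finally show ?thesis .
qed

lemma pre_app_eq: "pre A @ X = pre B \<Longrightarrow> B = A + length X \<and> map t [A..<B] = X"
proof -
  assume h: "pre A @ X = pre B"
  then have B: "B = A + length X" by (metis length_append pre_len)
  then have "pre B = pre A @ map t [A..<B]" by (simp add: pre_add)
  with h B show ?thesis by simp
qed

lemma sq_add: "sq n (q + m) = sq n q + length ((sg ^^ n) (map t [q..<q+m]))
   \<and> map t [sq n q..<sq n (q + m)] = (sg ^^ n) (map t [q..<q+m])"
proof -
  have "pre (sq n (q+m)) = (sg ^^ n) (pre (q+m))" by (simp add: pre_sigma)
  also have "\<dots> = pre (sq n q) @ (sg ^^ n) (map t [q..<q+m])"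
    by (simp add: pre_add sgn_append pre_sigma)
  finally show ?thesis using pre_app_eq by metis
qed

lemma sq0[simp]: "sq n 0 = 0" by (simp add: sq_def pre_def)

lemma sq_Suc: "sq n (Suc q) = sq n q + length ((sg ^^ n) [t q])"
  using sq_add[of n q 1] by simp

lemma sq_Suc_n: "sq (Suc n) j = sq 1 (sq n j)"
proof -
  have "(sg ^^ n) (pre j) = pre (sq n j)" by (rule pre_sigma)
  then show ?thesis by (simp add: sq_def[of "Suc n"] sq_def[of "Suc 0"])
qed

lemma sq_strict: "sq n q < sq n (Suc q)"
proof -
  have "1 \<le> length ((sg ^^ n) [t q])" using sgn_len[of "[t q]" n] by simp
  then show ?thesis using sq_Suc[of n q] by linarith
qed

lemma sq_mono: "q \<le> q' \<Longrightarrow> sq n q \<le> sq n q'"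
  by (induction q' rule: dec_induct) (auto intro: le_trans less_imp_le sq_strict)

lemma sq_smono: "q < q' \<Longrightarrow> sq n q < sq n q'"
  using sq_mono[of "Suc q" q' n] sq_strict[of n q] by simp



lemma morph_012: "trib_morph 0 = [0,1]" "trib_morph 1 = [0,2]" "trib_morph 2 = [0]"
  by (simp_all add: numeral_2_eq_2)

lemma lt3_cases: "(a::nat) < 3 \<Longrightarrow> a = 0 \<or> a = 1 \<or> a = 2" by auto

lemma block: "sq 1 (Suc q) = sq 1 q + length (trib_morph (t q))
   \<and> map t [sq 1 q..<sq 1 (Suc q)] = trib_morph (t q)"
proof -
  have e1: "sq 1 (q+1) = sq 1 q + length ((sg^^1) (map t [q..<q+1]))"
    using sq_add[of 1 q 1] by (rule conjunct1)
  have e2: "map t [sq 1 q..<sq 1 (q+1)] = (sg^^1) (map t [q..<q+1])"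
    using sq_add[of 1 q 1] by (rule conjunct2)
  have m: "(sg^^1) (map t [q..<q+1]) = trib_morph (t q)" by simp
  show ?thesis using e1[unfolded m] e2[unfolded m] by simp
qed

lemma bracket: "\<exists>q. sq 1 q \<le> p \<and> p < sq 1 (Suc q)"
proof (induction p)
  case 0 then show ?case using sq_strict[of 1 0] by (intro exI[of _ 0]) simp
next
  case (Suc p)
  then obtain q where q: "sq 1 q \<le> p" "p < sq 1 (Suc q)" by blast
  show ?case
  proof (cases "Suc p < sq 1 (Suc q)")
    case True then show ?thesis using q by (intro exI[of _ q]) simp
  next
    case False then have "Suc p = sq 1 (Suc q)" using q by simp
    then show ?thesis using sq_strict[of 1 "Suc q"] by (intro exI[of _ "Suc q"]) simp
  qed
qed

lemma block_pos: "\<exists>q. sq 1 q \<le> p \<and> p < sq 1 (Suc q) \<and> t p = trib_morph (t q) ! (p - sq 1 q)"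
proof -
  obtain q where q: "sq 1 q \<le> p" "p < sq 1 (Suc q)" using bracket by blast
  have m: "map t [sq 1 q..<sq 1 (Suc q)] = trib_morph (t q)" using block by blast
  have "t p = map t [sq 1 q..<sq 1 (Suc q)] ! (p - sq 1 q)" using q by simp
  then show ?thesis using q m by auto
qed

lemma t_sq: "t (sq 1 q) = 0"
proof -
  have m: "map t [sq 1 q..<sq 1 (Suc q)] = trib_morph (t q)" using block by blast
  have "sq 1 q < sq 1 (Suc q)" by (rule sq_strict)
  then have "t (sq 1 q) = map t [sq 1 q..<sq 1 (Suc q)] ! 0" by simp
  then show ?thesis using m morph_hd[of "t q"] by auto
qed

lemma t_zero_iff: "t p = 0 \<longleftrightarrow> (\<exists>q. p = sq 1 q)"
proof
  assume z: "t p = 0"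
  obtain q where q: "sq 1 q \<le> p" "p < sq 1 (Suc q)" "t p = trib_morph (t q) ! (p - sq 1 q)"
    using block_pos by blast
  have l: "sq 1 (Suc q) = sq 1 q + length (trib_morph (t q))" using block by blast
  show "\<exists>q. p = sq 1 q"
  proof (rule ccontr)
    assume "\<not> ?thesis"
    then have "p \<noteq> sq 1 q" by blast
    then have "p - sq 1 q = 1" using q l morph_len[of "t q"] by linarith
    then show False using q z l lt3_cases[OF t_lt3[of q]] by (auto simp: morph_012)
  qed
next
  assume "\<exists>q. p = sq 1 q" then show "t p = 0" using t_sq by auto
qed

lemma t_nz: "t p \<noteq> 0 \<Longrightarrow> \<exists>q. p = Suc (sq 1 q) \<and> Suc p = sq 1 (Suc q)"
proof -
  assume z: "t p \<noteq> 0"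
  obtain q where q: "sq 1 q \<le> p" "p < sq 1 (Suc q)" "t p = trib_morph (t q) ! (p - sq 1 q)"
    using block_pos by blast
  have l: "sq 1 (Suc q) = sq 1 q + length (trib_morph (t q))" using block by blast
  have "p \<noteq> sq 1 q" using z t_sq by auto
  then show ?thesis using q l morph_len[of "t q"] by (intro exI[of _ q]) linarith
qed

lemma t_nz_next: "t p \<noteq> 0 \<Longrightarrow> t (Suc p) = 0"
  using t_nz t_sq by metis

lemma t_nz_prev: "t p \<noteq> 0 \<Longrightarrow> 0 < p \<and> t (p - 1) = 0"
  using t_nz t_sq by (metis diff_Suc_1 zero_less_Suc)

lemma occ_at_append: "occ_at (a @ b) p \<longleftrightarrow> occ_at a p \<and> occ_at b (p + length a)"
proof -
  have "[p..<p + length (a @ b)] = [p..<p + length a] @ [p + length a..<p + length a + length b]"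
    using upt_add_eq_append[of p "p + length a" "length b"] by (simp add: add.assoc)
  then show ?thesis unfolding occ_at_def
    by (simp add: append_eq_append_conv)
qed

lemma occ_at_Nil[simp]: "occ_at [] p" by (simp add: occ_at_def)

lemma occ_at_single: "occ_at [c] p \<longleftrightarrow> t p = c" by (simp add: occ_at_def)

lemma occ_at_Cons: "occ_at (c # w) p \<longleftrightarrow> t p = c \<and> occ_at w (Suc p)"
  using occ_at_append[of "[c]" w p] by (simp add: occ_at_single)

lemma occ_at_map: "occ_at (map t [q..<q+N]) q" by (simp add: occ_at_def)

lemma occ_det: "occ_at a p \<Longrightarrow> occ_at b p \<Longrightarrow> length a = length b \<Longrightarrow> a = b"
  by (simp add: occ_at_def)

lemma occ_common: "occ_at a p \<Longrightarrow> occ_at b p \<Longrightarrow> length a \<le> length b \<Longrightarrow> \<exists>z. b = a @ z"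
proof -
  assume h: "occ_at a p" "occ_at b p" "length a \<le> length b"
  have "occ_at (take (length a) b) p" using h(2) occ_at_append[of "take (length a) b" "drop (length a) b" p] by simp
  then have "take (length a) b = a" using h occ_det by (simp add: min_def)
  then show ?thesis by (metis append_take_drop_id)
qed

lemma occ_letters: "occ_at w p \<Longrightarrow> \<forall>a\<in>set w. a < 3"
proof -
  assume "occ_at w p"
  then have "w = map t [p..<p+length w]" by (simp add: occ_at_def)
  then have "set w = t ` set [p..<p+length w]" by (metis list.set_map)
  then show ?thesis by (auto simp: t_lt3)
qed

lemma occ_sigma: "occ_at v q \<Longrightarrow> occ_at (sg v @ [0]) (sq 1 q)"
proof -
  assume h: "occ_at v q"
  have v: "map t [q..<q + length v] = v" using h by (simp add: occ_at_def)
  have a0: "sq 1 (q + length v) = sq 1 q + length ((sg^^1) (map t [q..<q + length v]))"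
    using sq_add[of 1 q "length v"] by (rule conjunct1)
  have b0: "map t [sq 1 q..<sq 1 (q + length v)] = (sg^^1) (map t [q..<q + length v])"
    using sq_add[of 1 q "length v"] by (rule conjunct2)
  have a: "sq 1 (q + length v) = sq 1 q + length (sg v)" using a0 v by simp
  have b: "map t [sq 1 q..<sq 1 q + length (sg v)] = sg v" using b0 v a by simp
  have "occ_at (sg v) (sq 1 q)" using b by (simp add: occ_at_def)
  moreover have "occ_at [0] (sq 1 q + length (sg v))" using t_sq[of "q + length v"] a
    by (simp add: occ_at_single)
  ultimately show ?thesis by (simp add: occ_at_append)
qed

lemma sg0: "\<exists>u. sg x @ [0] = 0 # u"
proof (cases x)
  case (Cons a l)
  obtain z where "trib_morph a = 0 # z" using morph_hd by blast
  then show ?thesis by (simp add: Cons)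
qed simp

lemma decode: "\<forall>a\<in>set x. a < 3 \<Longrightarrow> \<forall>a\<in>set y. a < 3 \<Longrightarrow> sg y @ [0] = sg x @ [0] @ z
   \<Longrightarrow> \<exists>z'. y = x @ z'"
proof (induction x arbitrary: y)
  case Nil then show ?case by simp
next
  case (Cons a x)
  show ?case
  proof (cases y)
    case Nil
    then show ?thesis using Cons.prems(3) morph_len[of a] by (auto dest: arg_cong[of _ _ length])
  next
    case (Cons b y')
    obtain u where u: "sg y' @ [0] = 0 # u" using sg0 by blast
    obtain v where v: "sg x @ [0] = 0 # v" using sg0 by blast
    have e: "trib_morph b @ 0 # u = trib_morph a @ 0 # v @ z"
      using \<open>sg y @ [0] = sg (a # x) @ [0] @ z\<close> Cons u v by simp
    have a3: "a < 3" and b3: "b < 3" using Cons.prems Cons by auto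
    have "a = b \<and> u = v @ z" using lt3_cases[OF a3] lt3_cases[OF b3] e
      by (auto simp: morph_012)
    then have "sg y' @ [0] = sg x @ [0] @ z" using u v by simp
    then obtain z' where "y' = x @ z'" using Cons.IH Cons.prems Cons by auto
    then show ?thesis using Cons \<open>a = b \<and> u = v @ z\<close> by auto
  qed
qed

lemma occ_decode: "\<forall>a\<in>set w. a < 3 \<Longrightarrow> occ_at (sg w @ [0]) (sq 1 q) \<Longrightarrow> occ_at w q"
proof -
  assume l: "\<forall>a\<in>set w. a < 3" and h: "occ_at (sg w @ [0]) (sq 1 q)"
  define y where "y = map t [q..<q + length (sg w)]"
  have hy: "occ_at (sg y @ [0]) (sq 1 q)" unfolding y_def by (rule occ_sigma[OF occ_at_map])
  have "length (sg w) \<le> length y" by (simp add: y_def)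
  also have "\<dots> \<le> length (sg y)" by (rule sg_len)
  finally have "length (sg w @ [0]) \<le> length (sg y @ [0])" by simp
  then obtain z where z: "sg y @ [0] = sg w @ [0] @ z" using occ_common[OF h hy] by auto
  have ly: "\<forall>a\<in>set y. a < 3" by (auto simp: y_def t_lt3)
  obtain z' where "y = w @ z'" using decode[OF l ly z] by blast
  moreover have "occ_at y q" unfolding y_def by (rule occ_at_map)
  ultimately have "occ_at (w @ z') q" by simp
  then show ?thesis by (simp add: occ_at_append)
qed



definition Qi :: "nat list \<Rightarrow> nat \<Rightarrow> nat list \<Rightarrow> bool" where
  "Qi w n x \<longleftrightarrow> (\<forall>p. occ_at w p \<longleftrightarrow> (\<exists>j. p = sq n j + length x)) \<and> (\<forall>j. occ_at (x @ w) (sq n j))"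

lemma seg_sg: "q \<le> q' \<Longrightarrow> map t [sq 1 q..<sq 1 q'] = sg (map t [q..<q'])"
  using conjunct2[OF sq_add[of 1 q "q' - q"]] by simp

lemma sq_le_iff: "sq n q \<le> sq n q' \<Longrightarrow> q \<le> q'"
  using sq_smono[of q' q n] by (metis not_le)

lemma occ_last: "occ_at w p \<Longrightarrow> w \<noteq> [] \<Longrightarrow> t (p + length w - 1) = last w"
proof -
  assume h: "occ_at w p" "w \<noteq> []"
  have "occ_at (butlast w @ [last w]) p" using h by simp
  then have "occ_at [last w] (p + length (butlast w))" by (simp only: occ_at_append)
  then have "t (p + length (butlast w)) = last w" by (simp add: occ_at_single)
  moreover have "p + length (butlast w) = p + length w - 1" using h(2) by (cases w) simp_all
  ultimately show ?thesis by metis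
qed

lemma occ_hd: "occ_at w p \<Longrightarrow> w \<noteq> [] \<Longrightarrow> t p = hd w"
  by (cases w) (auto simp: occ_at_Cons)

lemma desub:
  assumes ne: "w \<noteq> []" and h0: "hd w = 0" and oc: "occ_at w p"
  shows "\<exists>q w' r. p = sq 1 q \<and> occ_at w' q \<and> w = sg w' @ r \<and> (r = [0] \<or> (r = [] \<and> last w \<noteq> 0))"
proof -
  have "t p = 0" using occ_hd[OF oc ne] h0 by simp
  then obtain q where q: "p = sq 1 q" using t_zero_iff by blast
  have wm: "w = map t [p..<p + length w]" using oc by (simp add: occ_at_def)
  have lw: "t (p + length w - 1) = last w" by (rule occ_last[OF oc ne])
  have lpos: "0 < length w" using ne by simp
  show ?thesis
  proof (cases "last w = 0")
    case True
    then obtain q' where q': "p + length w - 1 = sq 1 q'" using lw t_zero_iff by metis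
    have "sq 1 q \<le> sq 1 q'" using q q' lpos by linarith
    then have qq: "q \<le> q'" by (rule sq_le_iff)
    have pl: "p \<le> p + length w - 1" using lpos by linarith
    have sl: "Suc (p + length w - 1) = p + length w" using lpos by simp
    have "[p..<p + length w] = [p..<p + length w - 1] @ [p + length w - 1]"
      using upt_Suc_append[OF pl] sl by metis
    then have "w = map t [p..<p + length w - 1] @ [t (p + length w - 1)]"
      using wm by (metis map_append list.map(1) list.map(2))
    also have "\<dots> = sg (map t [q..<q']) @ [0]" using seg_sg[OF qq] q q' True lw by simp
    finally show ?thesis using q qq occ_at_map[of q "q' - q"] True
      by (intro exI[of _ q] exI[of _ "map t [q..<q']"] exI[of _ "[0]"]) simp
  next
    case False
    then have "t (p + length w) = 0" using lw t_nz_next[of "p + length w - 1"] lpos by simp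
    then obtain q' where q': "p + length w = sq 1 q'" using t_zero_iff by metis
    have qq: "q \<le> q'" using q q' lpos sq_le_iff[of 1 q q'] by simp
    have "w = sg (map t [q..<q'])" using wm seg_sg[OF qq] q q' by simp
    then show ?thesis using q qq occ_at_map[of q "q' - q"] False
      by (intro exI[of _ q] exI[of _ "map t [q..<q']"] exI[of _ "[]"]) simp
  qed
qed

lemma sg_ne: "w \<noteq> [] \<Longrightarrow> sg w \<noteq> []"
proof (cases w)
  case (Cons a l) then show ?thesis using morph_len(1)[of a] by auto
qed simp

lemma step:
  assumes Q: "Qi w' n x'" and ne: "w' \<noteq> []" and w0: "w0 = sg w' @ r"
    and r: "r = [0] \<or> (r = [] \<and> last w0 \<noteq> 0)"
  shows "Qi w0 (Suc n) (sg x')"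
proof -
  have Q1: "\<And>p. occ_at w' p \<longleftrightarrow> (\<exists>j. p = sq n j + length x')"
    and Q2: "\<And>j. occ_at (x' @ w') (sq n j)" using Q by (auto simp: Qi_def)
  have ii: "occ_at (sg x' @ w0) (sq (Suc n) j)" for j
  proof -
    have "occ_at (sg (x' @ w') @ [0]) (sq 1 (sq n j))" by (rule occ_sigma[OF Q2])
    then have A: "occ_at (sg x' @ sg w' @ [0]) (sq (Suc n) j)" by (simp add: sq_Suc_n[of n j])
    show ?thesis using r
    proof
      assume "r = [0]" then show ?thesis using A w0 by simp
    next
      assume "r = [] \<and> last w0 \<noteq> 0"
      then show ?thesis using A w0 by (simp add: occ_at_append)
    qed
  qed
  have lett: "\<forall>a\<in>set w'. a < 3" using Q1[of "sq n 0 + length x'"] occ_letters by blast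
  have i: "occ_at w0 p \<longleftrightarrow> (\<exists>j. p = sq (Suc n) j + length (sg x'))" for p
  proof
    assume "\<exists>j. p = sq (Suc n) j + length (sg x')"
    then show "occ_at w0 p" using ii by (auto simp: occ_at_append)
  next
    assume oc: "occ_at w0 p"
    have oc2: "occ_at (sg w' @ [0]) p" using r
    proof
      assume "r = [0]" then show ?thesis using oc w0 by simp
    next
      assume rr: "r = [] \<and> last w0 \<noteq> 0"
      then have w0e: "w0 = sg w'" using w0 by simp
      have ne0: "w0 \<noteq> []" using w0e sg_ne[OF ne] by simp
      have "t (p + length w0 - 1) \<noteq> 0" using occ_last[OF oc ne0] rr by simp
      then have "t (Suc (p + length w0 - 1)) = 0" by (rule t_nz_next)
      then have "occ_at [0] (p + length w0)" using ne0 by (simp add: occ_at_single)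
      then show ?thesis using oc w0e by (simp add: occ_at_append)
    qed
    obtain u where u: "sg w' @ [0] = 0 # u" using sg0 by blast
    have "t p = 0" using oc2 u by (simp add: occ_at_Cons)
    then obtain q where q: "p = sq 1 q" using t_zero_iff by blast
    have "occ_at w' q" using occ_decode[OF lett] oc2 q by simp
    then obtain j where j: "q = sq n j + length x'" using Q1 by blast
    have xo: "occ_at x' (sq n j)" using Q2[of j] by (simp add: occ_at_append)
    then have xm: "map t [sq n j..<sq n j + length x'] = x'" by (simp add: occ_at_def)
    have "sq 1 (sq n j + length x') = sq 1 (sq n j) + length ((sg^^1) (map t [sq n j..<sq n j + length x']))"
      by (rule conjunct1[OF sq_add])
    then have "p = sq (Suc n) j + length (sg x')" using q j xm by (simp add: sq_Suc_n[of n j])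
    then show "\<exists>j. p = sq (Suc n) j + length (sg x')" by blast
  qed
  show ?thesis using i ii by (simp add: Qi_def)
qed

lemma shift:
  assumes Q: "Qi (0 # w) n x" and ne: "w \<noteq> []" and h: "hd w \<noteq> 0"
  shows "Qi w n (x @ [0])"
proof -
  have Q1: "\<And>p. occ_at (0 # w) p \<longleftrightarrow> (\<exists>j. p = sq n j + length x)"
    and Q2: "\<And>j. occ_at (x @ 0 # w) (sq n j)" using Q by (auto simp: Qi_def)
  have i: "occ_at w p \<longleftrightarrow> (\<exists>j. p = sq n j + length (x @ [0]))" for p
  proof
    assume oc: "occ_at w p"
    have "t p \<noteq> 0" using occ_hd[OF oc ne] h by simp
    then have p: "0 < p" "t (p - 1) = 0" using t_nz_prev by auto
    then have "occ_at (0 # w) (p - 1)" using oc by (simp add: occ_at_Cons)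
    then obtain j where "p - 1 = sq n j + length x" using Q1 by blast
    then show "\<exists>j. p = sq n j + length (x @ [0])" using p by (intro exI[of _ j]) simp
  next
    assume "\<exists>j. p = sq n j + length (x @ [0])"
    then obtain j where j: "p = Suc (sq n j + length x)" by auto
    then have "occ_at (0 # w) (sq n j + length x)" using Q1 by blast
    then show "occ_at w p" using j by (simp add: occ_at_Cons)
  qed
  show ?thesis using i Q2 by (simp add: Qi_def)
qed



lemma len_sg_filter: "\<forall>a\<in>set w. a < 3 \<Longrightarrow> length (sg w) = length w + length (filter (\<lambda>a. a \<noteq> 2) w)"
proof (induction w)
  case (Cons a l)
  have "a = 0 \<or> a = 1 \<or> a = 2" using Cons.prems by auto
  then show ?case using Cons by (auto simp: morph_012)
qed simp

lemma last_sg: "w \<noteq> [] \<Longrightarrow> last (sg w) = last (trib_morph (last w))"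
proof (induction w)
  case (Cons a l)
  show ?case
  proof (cases "l = []")
    case True then show ?thesis by simp
  next
    case False
    then have "sg l \<noteq> []" by (rule sg_ne)
    then show ?thesis using Cons False by simp
  qed
qed simp

definition mu :: "nat list \<Rightarrow> nat" where
  "mu w = 3 * length w + (if w = [2] then 2 else if w = [1] then 1 else 0)"

lemma mu_bounds: "3 * length w \<le> mu w" "mu w \<le> 3 * length w + 2"
  by (auto simp: mu_def)

lemma mu_decrease:
  assumes w0: "w0 = (if hd w = 0 then w else 0 # w)" and wne: "w \<noteq> []"
    and ne: "w' \<noteq> []" and lett: "\<forall>a\<in>set w'. a < 3"
    and dec: "w0 = sg w' @ r" and r: "r = [0] \<or> (r = [] \<and> last w0 \<noteq> 0)"
  shows "mu w' < mu w"
proof -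
  define f where "f = length (filter (\<lambda>a. a \<noteq> 2) w')"
  have L: "length w0 = length w' + f + length r" using dec len_sg_filter[OF lett] f_def by simp
  have lastw': "r = [] \<Longrightarrow> last w' \<noteq> 2"
  proof
    assume "r = []" "last w' = 2"
    then have "last w0 = last (sg w')" using dec by simp
    also have "\<dots> = 0" using last_sg[OF ne] \<open>last w' = 2\<close> by (simp add: morph_012)
    finally show False using r \<open>r = []\<close> by simp
  qed
  have f1: "r = [] \<Longrightarrow> 1 \<le> f"
  proof -
    assume "r = []"
    then have "last w' \<in> set (filter (\<lambda>a. a \<noteq> 2) w')" using lastw' ne by simp
    then show "1 \<le> f" unfolding f_def by (cases "filter (\<lambda>a. a \<noteq> 2) w'") auto
  qed
  have lt_ok: "length w' < length w \<Longrightarrow> mu w' < mu w"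
    using mu_bounds[of w'] mu_bounds[of w] by linarith
  show ?thesis
  proof (cases "hd w = 0")
    case True
    then have "length w0 = length w" using w0 by simp
    moreover have "1 \<le> f + length r" using f1 r by auto
    ultimately show ?thesis using L lt_ok by linarith
  next
    case False
    then have w0e: "w0 = 0 # w" using w0 by simp
    obtain a l where al: "w' = a # l" using ne by (cases w') auto
    have a2: "a \<noteq> 2"
    proof
      assume "a = 2"
      then have "w = sg l @ r" using dec w0e al by (simp add: morph_012)
      then show False
      proof (cases l)
        case Nil then show False using \<open>w = sg l @ r\<close> r wne False w0e by auto
      next
        case (Cons b l')
        obtain z where "trib_morph b = 0 # z" using morph_hd by blast
        then show False using \<open>w = sg l @ r\<close> Cons False by simp
      qed
    qed
    have fa: "f = 1 + length (filter (\<lambda>a. a \<noteq> 2) l)" using al a2 f_def by simp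
    show ?thesis
    proof (cases "length w' < length w")
      case True then show ?thesis by (rule lt_ok)
    next
      case nl: False
      have lw0: "length w0 = length w + 1" using w0e by simp
      then have "length w' + f + length r \<le> length w' + 1" using L nl by linarith
      then have "length r = 0" "length (filter (\<lambda>a. a \<noteq> 2) l) = 0" using fa by linarith+
      then have r0: "r = []" and fl: "filter (\<lambda>a. a \<noteq> 2) l = []" by simp_all
      have l0: "l = []"
      proof (rule ccontr)
        assume "l \<noteq> []"
        then have "last w' = last l" using al by simp
        then have "last l \<noteq> 2" using lastw'[OF r0] by simp
        then have "last l \<in> set (filter (\<lambda>a. a \<noteq> 2) l)" using \<open>l \<noteq> []\<close> by simp
        then show False using fl by simp
      qed
      have "a < 3" using lett al by simp
      then have "a = 0 \<or> a = 1" using a2 by auto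
      then show ?thesis
      proof
        assume "a = 0"
        then have "w = [1]" using dec w0e al l0 r0 by (simp add: morph_012)
        then show ?thesis using al l0 \<open>a = 0\<close> by (simp add: mu_def)
      next
        assume "a = 1"
        then have "w = [2]" using dec w0e al l0 r0 by (simp add: morph_012)
        then show ?thesis using al l0 \<open>a = 1\<close> by (simp add: mu_def)
      qed
    qed
  qed
qed

lemma key: "w \<noteq> [] \<Longrightarrow> occ_at w i \<Longrightarrow> \<exists>n x. 1 \<le> n \<and> (w \<noteq> [0] \<longrightarrow> 2 \<le> n) \<and> Qi w n x"
proof (induction w arbitrary: i rule: measure_induct_rule[where f = mu])
  case (less w)
  show ?case
  proof (cases "w = [0]")
    case True
    have "Qi [0] 1 []" by (auto simp: Qi_def occ_at_single t_zero_iff t_sq)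
    then show ?thesis using True by auto
  next
    case False
    define w0 where "w0 = (if hd w = 0 then w else 0 # w)"
    have w0ne: "w0 \<noteq> []" and hw0: "hd w0 = 0" using less.prems by (auto simp: w0_def)
    have "\<exists>i0. occ_at w0 i0"
    proof (cases "hd w = 0")
      case True then show ?thesis using less.prems w0_def by auto
    next
      case hf: False
      have "t i \<noteq> 0" using occ_hd[OF less.prems(2) less.prems(1)] hf by simp
      then have p: "0 < i" "t (i - 1) = 0" using t_nz_prev by auto
      then have "occ_at (0 # w) (i - 1)" using less.prems(2) by (simp add: occ_at_Cons)
      then show ?thesis using hf w0_def by auto
    qed
    then obtain i0 where oi0: "occ_at w0 i0" by blast
    obtain q w' r where d: "i0 = sq 1 q" "occ_at w' q" "w0 = sg w' @ r"
      and r: "r = [0] \<or> (r = [] \<and> last w0 \<noteq> 0)"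
      using desub[OF w0ne hw0 oi0] by blast
    have w'ne: "w' \<noteq> []"
    proof
      assume "w' = []"
      then have "w0 = r" using d by simp
      then have "w0 = [0]" using r w0ne by auto
      then show False using False less.prems(1) by (auto simp: w0_def split: if_splits)
    qed
    have lett: "\<forall>a\<in>set w'. a < 3" using occ_letters[OF d(2)] .
    have "mu w' < mu w"
      by (rule mu_decrease[OF w0_def less.prems(1) w'ne lett d(3) r])
    then obtain n' x' where n': "1 \<le> n'" "Qi w' n' x'" using less.IH[OF _ w'ne d(2)] by blast
    have Q0: "Qi w0 (Suc n') (sg x')" by (rule step[OF n'(2) w'ne d(3) r])
    show ?thesis
    proof (cases "hd w = 0")
      case True
      then show ?thesis using Q0 n' w0_def by auto
    next
      case hf: False
      then have "Qi (0 # w) (Suc n') (sg x')" using Q0 w0_def by simp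
      then have "Qi w (Suc n') (sg x' @ [0])" by (rule shift[OF _ less.prems(1) hf])
      then show ?thesis using n' by auto
    qed
  qed
qed



lemma T7: "trib_iter 7 = [0,1,0,2,0,1,0,0,1,0,2,0,1,0,1,0,2,0,1,0,0,1,0,2,0,1,0,2,0,1,0,0,1,0,2,0,1,0,1,0,2,0,1,0,0,1,0,2,0,1,0,0,1,0,2,0,1,0,1,0,2,0,1,0,0,1,0,2,0,1,0,2,0,1,0,0,1,0,2,0,1]"
  by (simp add: trib_iter_def eval_nat_numeral morph_012 trib_apply_def)

lemma map_t_T: "b \<le> length (trib_iter m) \<Longrightarrow> map t [a..<b] = drop a (take b (trib_iter m))"
  by (rule nth_equalityI) (auto simp: t_T[of _ m])

lemma occ_alt: "length w \<le> length u \<Longrightarrow>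
  occ u w = length (filter (\<lambda>j. take (length w) (drop j u) = w) [0..<Suc (length u - length w)])"
proof -
  assume h: "length w \<le> length u"
  have "{j. j + length w \<le> length u \<and> take (length w) (drop j u) = w}
      = set (filter (\<lambda>j. take (length w) (drop j u) = w) [0..<Suc (length u - length w)])"
    using h by (auto simp del: upt_Suc)
  then have "occ u w = card (set (filter (\<lambda>j. take (length w) (drop j u) = w) [0..<Suc (length u - length w)]))"
    unfolding occ_def by (simp only:)
  also have "\<dots> = length (filter (\<lambda>j. take (length w) (drop j u) = w) [0..<Suc (length u - length w)])"
    by (intro distinct_card distinct_filter distinct_upt)
  finally show ?thesis .
qed

lemma u0: "map t [43..<52] = [0, 0, 1, 0, 2, 0, 1, 0, 0]"
proof -
  have "map t [43..<52] = drop 43 (take 52 (trib_iter 7))" by (rule map_t_T) (simp add: T7)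
  also have "\<dots> = [0, 0, 1, 0, 2, 0, 1, 0, 0]" by (simp add: T7)
  finally show ?thesis .
qed
lemma v0: "map t [8..<17] = [1, 0, 2, 0, 1, 0, 1, 0, 2]"
proof -
  have "map t [8..<17] = drop 8 (take 17 (trib_iter 7))" by (rule map_t_T) (simp add: T7)
  also have "\<dots> = [1, 0, 2, 0, 1, 0, 1, 0, 2]" by (simp add: T7)
  finally show ?thesis .
qed

lemma occ_u0: "occ (map t [43..<52]) [0] = 6"
  unfolding u0 by (simp add: occ_alt)
lemma occ_v0: "occ (map t [8..<17]) [0] = 4"
  unfolding v0 by (simp add: occ_alt)

lemma t03: "t 0 = 0" "t 3 = 2"
proof -
  have T2: "trib_iter 2 = [0,1,0,2]"
    by (simp add: trib_iter_def eval_nat_numeral morph_012 trib_apply_def)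
  show "t 0 = 0" using t_T[of 0 2] T2 by simp
  show "t 3 = 2" using t_T[of 3 2] T2 by simp
qed

lemma map_fac: "map t [a..<a+L] \<in> factors t"
  unfolding factors_def by (auto intro: exI[of _ a])

lemma window: "j + k \<le> L \<Longrightarrow> take k (drop j (map t [a..<a+L])) = map t [a+j..<a+j+k]"
  by (simp add: drop_map take_map add.assoc)

lemma gap: "2 \<le> n \<Longrightarrow> length ((sg^^n) [2]) + 2 \<le> length ((sg^^n) [0])"
proof -
  assume "2 \<le> n"
  then obtain m where m: "n = Suc (Suc m)" by (metis add_2_eq_Suc le_Suc_ex)
  have e: "(sg^^n) [c] = (sg^^m) (sg (sg [c]))" for c
    by (simp add: m funpow_Suc_right del: funpow.simps)
  have "(sg^^n) [0] = (sg^^m) [0,1] @ (sg^^m) [0,2]"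
    using e[of 0] sgn_append[of m "[0,1]" "[0,2]"] by (simp add: morph_012)
  moreover have "(sg^^n) [2] = (sg^^m) [0,1]"
    using e[of 2] by (simp add: morph_012)
  moreover have "2 \<le> length ((sg^^m) [0,2])" using sgn_len[of "[0,2]" m] by simp
  ultimately show ?thesis by simp
qed

theorem theorem23:
  fixes k :: nat
  assumes "k \<ge> 1"
  shows "totally_unbalanced k 1 tribonacci"
  unfolding totally_unbalanced_def
proof (intro ballI impI)
  fix w assume wf: "w \<in> factors t" and lk: "length w = k"
  obtain i where "w = map t [i..<i + length w]" using wf unfolding factors_def by blast
  then have oi: "occ_at w i" by (simp add: occ_at_def)
  have wne: "w \<noteq> []" using lk assms by auto
  show "\<exists>u\<in>factors t. \<exists>v\<in>factors t. length u = length v \<and> \<bar>int (occ u w) - int (occ v w)\<bar> > int 1"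
  proof (cases "w = [0]")
    case True
    show ?thesis
      by (rule bexI[of _ "map t [43..<52]"], rule bexI[of _ "map t [8..<17]"])
         (use True occ_u0 occ_v0 map_fac[of 43 9] map_fac[of 8 9] in auto)
  next
    case False
    obtain n x where n2: "2 \<le> n" and Q: "Qi w n x" using key[OF wne oi] False by blast
    have Q1: "\<And>p. occ_at w p \<longleftrightarrow> (\<exists>j. p = sq n j + length x)" using Q by (simp add: Qi_def)
    define g where "g c = length ((sg^^n) [c])" for c
    have sqS: "sq n (Suc j) = sq n j + g (t j)" for j by (simp add: g_def sq_Suc)
    have gp: "g 2 + 2 \<le> g 0" using gap[OF n2] by (simp add: g_def)
    have g1: "1 \<le> g 2" using sgn_len[of "[2]" n] by (simp add: g_def)
    have s1: "sq n 1 = g 0" using sqS[of 0] t03 by simp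
    have s4: "sq n 4 = sq n 3 + g 2" using sqS[of 3] t03 by (simp add: eval_nat_numeral)
    define a where "a = sq n 3 + length x"
    define L where "L = g 2 + k"
    define u where "u = map t [a..<a+L]"
    define b where "b = length x + 1"
    define v where "v = map t [b..<b+L]"
    let ?S = "{j. j + length w \<le> length u \<and> take (length w) (drop j u) = w}"
    have "0 \<in> ?S"
    proof -
      have "occ_at w a" using Q1 a_def by blast
      then show ?thesis using window[of 0 k L a] lk by (simp add: u_def L_def occ_at_def)
    qed
    moreover have "g 2 \<in> ?S"
    proof -
      have "occ_at w (a + g 2)" using Q1 a_def s4 by (metis add.commute add.left_commute)
      then show ?thesis using window[of "g 2" k L a] lk by (simp add: u_def L_def occ_at_def)
    qed
    ultimately have sub: "{0, g 2} \<subseteq> ?S" by blast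
    have fin: "finite ?S" by (rule finite_subset[of _ "{..length u}"]) auto
    have "2 \<le> card ?S" using card_mono[OF fin sub] g1 by simp
    then have ou: "2 \<le> occ u w" by (simp add: occ_def)
    have "{j. j + length w \<le> length v \<and> take (length w) (drop j v) = w} = {}"
    proof (rule ccontr)
      assume "\<not> ?thesis"
      then obtain j where j: "j + k \<le> L" "take k (drop j v) = w" using lk by (auto simp: v_def)
      then have "occ_at w (b + j)" using window[of j k L b] lk by (simp add: v_def occ_at_def)
      then obtain i where "b + j = sq n i + length x" using Q1 by blast
      then have si: "sq n i = j + 1" using b_def by simp
      show False
      proof (cases i)
        case 0 then show False using si by simp
      next
        case (Suc i')
        then have "sq n 1 \<le> sq n i" using sq_mono by simp
        then show False using si s1 gp j(1) L_def by simp
      qed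
    qed
    then have ov: "occ v w = 0" by (simp only: occ_def card.empty)
    show ?thesis
      by (rule bexI[of _ u], rule bexI[of _ v])
         (use ou ov map_fac in \<open>auto simp: u_def v_def\<close>)
  qed
qed

end
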